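(* Let $M=P+\varepsilon D\in\mathbb{DH}[t]$ be monic with $\operatorname{mrpf}(P)=1$, and suppose $M$ admits a factorization $M=(t-h_1)\cdots(t-h_k)$ with $h_i\in\mathbb{DH}$. Write $P\overline{P}=\prod_{i=1}^m N_i^{n_i}$ with pairwise coprime irreducible monic $N_i\in\mathbb{R}[t]$. Then for every $x_0\in\mathbb{R}$ and every $x=x_1\mathbf{i}+x_2\mathbf{j}+x_3\mathbf{k}$ with $x_1,x_2,x_3\in\mathbb{R}$, setting $X=Px\overline{P}+x_0(P\overline{D}-D\overline{P})\in\mathbb{H}[t]$, for every $i$ with $n_i>1$ the polynomial $N_i^{n_i}$ divides the real polynomial $X\overline{X}$. (Geometrically: every intersection point of multiplicity $\mu>1$ of a trajectory $t\mapsto x_0P\overline{P}+\varepsilon X$ of the motion parametrized by $M$ with the plane at infinity lies on the absolute circle with multiplicity $\mu$.)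
   Context: $\mathbb{D}=\mathbb{R}[\varepsilon]/\langle\varepsilon^2\rangle$ denotes the dual numbers. $\mathbb{H}$ denotes the real quaternions with basis $1,\mathbf{i},\mathbf{j},\mathbf{k}$, $\mathbf{i}^2=\mathbf{j}^2=\mathbf{k}^2=\mathbf{i}\mathbf{j}\mathbf{k}=-1$. The dual quaternions $\mathbb{DH}$ are $\mathbb{H}\otimes_{\mathbb{R}}\mathbb{D}$ ($\varepsilon$ central). Conjugation: $\overline{q_0+q_1\mathbf{i}+q_2\mathbf{j}+q_3\mathbf{k}}=q_0-q_1\mathbf{i}-q_2\mathbf{j}-q_3\mathbf{k}$; for polynomials $\overline{\sum m_it^i}=\sum\overline{m_i}t^i$, and $Q\overline{Q}$ is real-valued for $Q\in\mathbb{H}[t]$. $\mathbb{DH}[t]$ is the polynomial ring with $t$ commuting with all coefficients; $M=P+\varepsilon D$ with $P,D\in\mathbb{H}[t]$ is the decomposition into primal and dual part. $\operatorname{mrpf}(P)=1$ means $P$ has no factor $c\in\mathbb{R}[t]$ of positive degree. The trajectory of the point $x_0+\varepsilon x$ of projective 3-space under $M$ is $(P-\varepsilon D)(x_0+\varepsilon x)(\overline{P}+\varepsilon\overline{D})=x_0P\overline{P}+\varepsilon X$; its points at infinity correspond to zeros of $x_0P\overline{P}$, and the absolute circle is given by $x_0=0$, $\overline{X}X=0$. *)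

theory Defs
  imports "HOL-Computational_Algebra.Polynomial"
begin

text \<open>Quaternions q0 + q1 i + q2 j + q3 k with coefficients in a commutative ring.
  The polynomial ring H[t] (t central) is identified with quaternions over R[t],
  i.e. the type real poly quat.\<close>

datatype 'a quat = Quat (q0: 'a) (q1: 'a) (q2: 'a) (q3: 'a)

definition qzero :: "'a::comm_ring_1 quat" where "qzero = Quat 0 0 0 0"
definition qone :: "'a::comm_ring_1 quat" where "qone = Quat 1 0 0 0"

definition qadd :: "'a::comm_ring_1 quat \<Rightarrow> 'a quat \<Rightarrow> 'a quat" where
  "qadd a b = Quat (q0 a + q0 b) (q1 a + q1 b) (q2 a + q2 b) (q3 a + q3 b)"

definition qneg :: "'a::comm_ring_1 quat \<Rightarrow> 'a quat" where
  "qneg a = Quat (- q0 a) (- q1 a) (- q2 a) (- q3 a)"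

definition qsub :: "'a::comm_ring_1 quat \<Rightarrow> 'a quat \<Rightarrow> 'a quat" where
  "qsub a b = qadd a (qneg b)"

definition qmul :: "'a::comm_ring_1 quat \<Rightarrow> 'a quat \<Rightarrow> 'a quat" where
  "qmul a b = Quat
     (q0 a * q0 b - q1 a * q1 b - q2 a * q2 b - q3 a * q3 b)
     (q0 a * q1 b + q1 a * q0 b + q2 a * q3 b - q3 a * q2 b)
     (q0 a * q2 b - q1 a * q3 b + q2 a * q0 b + q3 a * q1 b)
     (q0 a * q3 b + q1 a * q2 b - q2 a * q1 b + q3 a * q0 b)"

definition qcnj :: "'a::comm_ring_1 quat \<Rightarrow> 'a quat" where
  "qcnj a = Quat (q0 a) (- q1 a) (- q2 a) (- q3 a)"

definition qscal :: "'a::comm_ring_1 \<Rightarrow> 'a quat \<Rightarrow> 'a quat" where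
  "qscal c a = Quat (c * q0 a) (c * q1 a) (c * q2 a) (c * q3 a)"

type_synonym qpoly = "real poly quat"

definition qconst :: "real quat \<Rightarrow> qpoly" where
  "qconst h = map_quat (\<lambda>a. [:a:]) h"

definition qvar :: qpoly where "qvar = Quat [:0, 1:] 0 0 0"

definition qcoeff :: "qpoly \<Rightarrow> nat \<Rightarrow> real quat" where
  "qcoeff P n = map_quat (\<lambda>p. coeff p n) P"

definition qdeg :: "qpoly \<Rightarrow> nat" where
  "qdeg P = max (max (degree (q0 P)) (degree (q1 P))) (max (degree (q2 P)) (degree (q3 P)))"

text \<open>Q * conj Q is real; this is its (real) scalar part.\<close>
definition qnorm :: "qpoly \<Rightarrow> real poly" where
  "qnorm Q = q0 (qmul Q (qcnj Q))"

definition mrpf_one :: "qpoly \<Rightarrow> bool" where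
  "mrpf_one P \<longleftrightarrow> \<not> (\<exists>c Q. degree c > 0 \<and> P = qscal c Q)"

text \<open>Dual quaternion polynomials M = P + eps D, represented as pairs (P, D).\<close>
type_synonym dqpoly = "qpoly \<times> qpoly"

definition dqmul :: "dqpoly \<Rightarrow> dqpoly \<Rightarrow> dqpoly" where
  "dqmul M N = (qmul (fst M) (fst N), qadd (qmul (fst M) (snd N)) (qmul (snd M) (fst N)))"

definition dqone :: dqpoly where "dqone = (qone, qzero)"

definition dqlin :: "real quat \<times> real quat \<Rightarrow> dqpoly" where
  "dqlin h = (qsub qvar (qconst (fst h)), qneg (qconst (snd h)))"

definition dqprod :: "(real quat \<times> real quat) list \<Rightarrow> dqpoly" where
  "dqprod hs = foldr (\<lambda>h acc. dqmul (dqlin h) acc) hs dqone"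

definition dq_monic :: "dqpoly \<Rightarrow> bool" where
  "dq_monic M \<longleftrightarrow> qcoeff (fst M) (qdeg (fst M)) = qone
      \<and> (\<forall>n\<ge>qdeg (fst M). qcoeff (snd M) n = qzero)"

end

theory Submission
  imports Defs "HOL-Computational_Algebra.Polynomial_Factorial" "HOL-Computational_Algebra.Field_as_Ring"
begin


lemma X_id:
  fixes P D x :: qpoly
  assumes "q0 x = 0"
  shows "qnorm (qadd (qmul (qmul P x) (qcnj P)) (qscal c (qsub (qmul P (qcnj D)) (qmul D (qcnj P)))))
   = qnorm P * (qnorm P * qnorm x
      + c * 2 * q0 (qmul x (qsub (qmul (qcnj P) D) (qmul (qcnj D) P))))
     + 4 * c*c * (qnorm P * qnorm D - q0 (qmul P (qcnj D)) * q0 (qmul P (qcnj D)))"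
proof -
  obtain a b e where x: "x = Quat 0 a b e" using assms by (cases x) auto
  obtain p0 p1 p2 p3 where P: "P = Quat p0 p1 p2 p3" by (cases P) 
  obtain d0 d1 d2 d3 where D: "D = Quat d0 d1 d2 d3" by (cases D) 
  show ?thesis unfolding x P D
    by (simp add: qnorm_def qmul_def qcnj_def qadd_def qsub_def qneg_def qscal_def algebra_simps)
qed


lemma qnorm_mul: "qnorm (qmul A B) = qnorm A * qnorm B"
  by (simp add: qnorm_def qmul_def qcnj_def) algebra

lemma S_rec: "q0 (qmul (qmul A B) (qcnj (qadd (qmul A E) (qmul F B)))) =
   qnorm A * q0 (qmul B (qcnj E)) + qnorm B * q0 (qmul A (qcnj F))"
  by (simp add: qnorm_def qmul_def qcnj_def qadd_def) algebra

lemma qmul_scal_right: "qmul A (qscal c B) = qscal c (qmul A B)"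
  by (simp add: qmul_def qscal_def algebra_simps)

lemma qmul_scal_left: "qmul (qscal c A) B = qscal c (qmul A B)"
  by (simp add: qmul_def qscal_def algebra_simps)

lemma qmul_one: "qmul qone B = B"
  by (cases B) (simp add: qmul_def qone_def)

lemma real_factor:
  assumes "h \<in> set hs" "q1 (fst h) = 0" "q2 (fst h) = 0" "q3 (fst h) = 0"
  shows "\<exists>Q. fst (dqprod hs) = qscal [:- q0 (fst h), 1:] Q"
  using assms(1)
proof (induction hs)
  case Nil then show ?case by simp
next
  case (Cons g hs)
  have e: "fst (dqprod (g # hs)) = qmul (fst (dqlin g)) (fst (dqprod hs))"
    by (simp add: dqprod_def dqmul_def)
  show ?case
  proof (cases "g = h")
    case True
    have "fst (dqlin g) = qscal [:- q0 (fst h), 1:] qone"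
      using True assms(2-4)
      by (cases "fst h") (simp add: dqlin_def qsub_def qadd_def qneg_def qvar_def qconst_def qscal_def qone_def)
    then show ?thesis unfolding e by (auto simp: qmul_scal_left qmul_one)
  next
    case False
    then have "h \<in> set hs" using Cons.prems by auto
    then obtain Q where "fst (dqprod hs) = qscal [:- q0 (fst h), 1:] Q" using Cons.IH by blast
    then show ?thesis unfolding e by (auto simp: qmul_scal_right)
  qed
qed

lemma nu_formula:
  "qnorm (fst (dqlin h)) = [: (q0 (fst h))^2 + (q1 (fst h))^2 + (q2 (fst h))^2 + (q3 (fst h))^2, - 2 * q0 (fst h), 1:]"
proof -
  obtain a b c d where h: "fst h = Quat a b c d" by (cases "fst h")
  show ?thesis
    by (rule poly_eqI) (simp add: h dqlin_def qsub_def qadd_def qneg_def qvar_def qconst_def qnorm_def qmul_def qcnj_def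
          coeff_pCons power2_eq_square algebra_simps split: nat.splits)
qed



lemma nu_eq:
  fixes N :: "real poly"
  assumes irr: "irreducible N" and mon: "lead_coeff N = 1"
    and dv: "N dvd [:a^2 + s, -2*a, 1:]" and s: "s > 0"
  shows "N = [:a^2 + s, -2*a, 1:]"
proof -
  define \<nu> where "\<nu> = [:a^2 + s, -2*a, 1:]"
  have pos: "poly \<nu> r \<noteq> 0" for r
  proof -
    have "poly \<nu> r = (r - a)^2 + s" by (simp add: \<nu>_def power2_eq_square algebra_simps)
    moreover have "(r-a)^2 + s > 0" using s by (simp add: add_nonneg_pos)
    ultimately show ?thesis by simp
  qed
  have dnu: "degree \<nu> = 2" and lnu: "lead_coeff \<nu> = 1" by (simp_all add: \<nu>_def)
  have nz: "\<nu> \<noteq> 0" using dnu by auto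
  have dv': "N dvd \<nu>" using dv by (simp add: \<nu>_def)
  have dle: "degree N \<le> 2" using dvd_imp_degree_le[OF dv' nz] dnu by simp
  have d0: "degree N \<noteq> 0"
  proof
    assume "degree N = 0"
    then obtain c where "N = [:c:]" by (rule degree_eq_zeroE)
    then have "N = 1" using mon by (simp add: one_pCons)
    then have "is_unit N" by simp
    then show False using irr by (simp add: irreducible_def)
  qed
  have d1: "degree N \<noteq> 1"
  proof
    assume d: "degree N = 1"
    have c1: "coeff N 1 = 1" using mon d by simp
    have NN: "N = [:coeff N 0, 1:]"
    proof (rule poly_eqI)
      fix k show "coeff N k = coeff [:coeff N 0, 1:] k"
      proof (cases k)
        case 0 then show ?thesis by simp
      next
        case (Suc k') then show ?thesis
          using c1 d by (cases k') (auto simp: coeff_eq_0)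
      qed
    qed
    have "poly N (- coeff N 0) = 0" by (subst NN) simp
    moreover obtain k where k: "\<nu> = N * k" using dv' by (auto simp: dvd_def)
    ultimately have "poly \<nu> (- coeff N 0) = 0" by simp
    then show False using pos by blast
  qed
  have d2: "degree N = 2" using dle d0 d1 by linarith
  obtain q where q: "\<nu> = N * q" using dv' by (auto simp: dvd_def)
  have qnz: "q \<noteq> 0" using q nz by auto
  have Nnz: "N \<noteq> 0" using irr by auto
  have "degree \<nu> = degree N + degree q" using q degree_mult_eq[OF Nnz qnz] by simp
  then have "degree q = 0" using dnu d2 by simp
  then obtain c where c: "q = [:c:]" by (rule degree_eq_zeroE)
  have "lead_coeff \<nu> = lead_coeff N * lead_coeff q" using q by (simp add: lead_coeff_mult)
  then have "c = 1" using lnu mon c by simp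
  then have "q = 1" using c by (simp add: one_pCons)
  then show ?thesis using q by (simp add: \<nu>_def)
qed

lemma main_ind:
  fixes N :: "real poly"
  assumes nr: "\<forall>h\<in>set hs. \<not> (q1 (fst h) = 0 \<and> q2 (fst h) = 0 \<and> q3 (fst h) = 0)"
    and irr: "irreducible N" and mon: "lead_coeff N = 1"
  shows "N^(Suc a) dvd qnorm (fst (dqprod hs)) \<Longrightarrow>
         N^a dvd q0 (qmul (fst (dqprod hs)) (qcnj (snd (dqprod hs))))"
  using nr
proof (induction hs arbitrary: a)
  case Nil
  then show ?case by (simp add: dqprod_def dqone_def qmul_def qcnj_def qone_def qzero_def)
next
  case (Cons h hs)
  define l where "l = fst (dqlin h)"
  define d where "d = snd (dqlin h)"
  define P' where "P' = fst (dqprod hs)"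
  define D' where "D' = snd (dqprod hs)"
  have e: "dqprod (h # hs) = (qmul l P', qadd (qmul l D') (qmul d P'))"
    by (simp add: dqprod_def dqmul_def l_def d_def P'_def D'_def)
  have nP: "qnorm (fst (dqprod (h # hs))) = qnorm l * qnorm P'"
    by (simp add: e qnorm_mul)
  have S: "q0 (qmul (fst (dqprod (h # hs))) (qcnj (snd (dqprod (h # hs)))))
      = qnorm l * q0 (qmul P' (qcnj D')) + qnorm P' * q0 (qmul l (qcnj d))"
    by (simp add: e S_rec)
  define s where "s = (q1 (fst h))^2 + (q2 (fst h))^2 + (q3 (fst h))^2"
  have s: "s > 0"
  proof -
    have "s \<ge> 0" by (simp add: s_def)
    moreover have "s \<noteq> 0" using Cons.prems
      by (auto simp: s_def add_nonneg_eq_0_iff)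
    ultimately show ?thesis by simp
  qed
  have nu: "qnorm l = [:(q0 (fst h))^2 + s, -2 * q0 (fst h), 1:]"
    unfolding l_def nu_formula s_def by (simp add: add.assoc)
  have nr': "\<forall>h\<in>set hs. \<not> (q1 (fst h) = 0 \<and> q2 (fst h) = 0 \<and> q3 (fst h) = 0)"
    using Cons.prems by auto
  have Nnz: "N \<noteq> 0" using irr by auto
  show ?case
  proof (cases "N dvd qnorm l")
    case True
    then have NE: "N = qnorm l" using nu_eq[OF irr mon _ s] nu by simp
    have "N * N^a dvd N * qnorm P'" using Cons.prems(1) nP NE by simp
    then have aP: "N^a dvd qnorm P'" using Nnz by simp
    show ?thesis
    proof (cases a)
      case 0 then show ?thesis by simp
    next
      case (Suc b)
      then have "N^b dvd q0 (qmul P' (qcnj D'))"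
        using Cons.IH[OF _ nr'] aP by (simp add: P'_def D'_def)
      then have "N * N^b dvd qnorm l * q0 (qmul P' (qcnj D'))"
        using NE by (simp add: mult_dvd_mono)
      then have "N^a dvd qnorm l * q0 (qmul P' (qcnj D'))" using Suc by simp
      moreover have "N^a dvd qnorm P' * q0 (qmul l (qcnj d))" using aP by simp
      ultimately show ?thesis unfolding S by (rule dvd_add)
    qed
  next
    case False
    have "prime_elem N" using irr by (rule field_poly_irreducible_imp_prime)
    have "coprime N (qnorm l)"
    proof (rule coprimeI)
      fix c assume c: "c dvd N" "c dvd qnorm l"
      then obtain k where k: "N = c * k" by (auto simp: dvd_def)
      then have "is_unit c \<or> is_unit k" using irr by (simp add: irreducibleD)
      then show "is_unit c"
      proof
        assume "is_unit k"
        then have "N dvd c" using k by (simp add: mult_unit_dvd_iff)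
        then have "N dvd qnorm l" using c(2) by (rule dvd_trans)
        then show ?thesis using False by simp
      qed
    qed
    then have "coprime (N^Suc a) (qnorm l)" by (simp only: coprime_power_left_iff simp_thms)
    then have aP: "N^Suc a dvd qnorm P'"
      using Cons.prems(1) nP by (simp add: coprime_dvd_mult_right_iff)
    then have "N^a dvd q0 (qmul P' (qcnj D'))"
      using Cons.IH[OF _ nr'] by (simp add: P'_def D'_def)
    then have "N^a dvd qnorm l * q0 (qmul P' (qcnj D'))" by simp
    moreover have "N^a dvd qnorm P'" using aP by (metis dvd_mult_left power_Suc2)
    then have "N^a dvd qnorm P' * q0 (qmul l (qcnj d))" by simp
    ultimately show ?thesis unfolding S by (rule dvd_add)
  qed
qed


theorem theorem2:
  fixes P D :: qpoly and hs :: "(real quat \<times> real quat) list"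
    and m :: nat and N :: "nat \<Rightarrow> real poly" and n :: "nat \<Rightarrow> nat"
  assumes monic: "dq_monic (P, D)"
    and mrpf: "mrpf_one P"
    and fact: "(P, D) = dqprod hs"
    and decomp: "qnorm P = (\<Prod>i\<in>{1..m}. N i ^ n i)"
    and irr: "\<forall>i\<in>{1..m}. irreducible (N i) \<and> lead_coeff (N i) = 1"
    and copr: "\<forall>i\<in>{1..m}. \<forall>j\<in>{1..m}. i \<noteq> j \<longrightarrow> coprime (N i) (N j)"
  shows "\<forall>(x0::real) x1 x2 x3.
     (let x = qconst (Quat 0 x1 x2 x3);
          X = qadd (qmul (qmul P x) (qcnj P))
                   (qscal [:x0:] (qsub (qmul P (qcnj D)) (qmul D (qcnj P))))
      in \<forall>i\<in>{1..m}. n i > 1 \<longrightarrow> N i ^ n i dvd qnorm X)"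
proof (intro allI)
  fix x0 x1 x2 x3 :: real
  have PD: "P = fst (dqprod hs)" "D = snd (dqprod hs)" using fact by (metis fst_conv snd_conv)+
  have nr: "\<forall>h\<in>set hs. \<not> (q1 (fst h) = 0 \<and> q2 (fst h) = 0 \<and> q3 (fst h) = 0)"
  proof (intro ballI notI)
    fix h assume h: "h \<in> set hs" "q1 (fst h) = 0 \<and> q2 (fst h) = 0 \<and> q3 (fst h) = 0"
    then obtain Q where "fst (dqprod hs) = qscal [:- q0 (fst h), 1:] Q"
      using real_factor by blast
    then have "P = qscal [:- q0 (fst h), 1:] Q" using PD by simp
    moreover have "degree [:- q0 (fst h), 1:] > 0" by simp
    ultimately show False using mrpf unfolding mrpf_one_def by blast
  qed
  define x where "x = qconst (Quat 0 x1 x2 x3)"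
  have x0: "q0 x = 0" by (simp add: x_def qconst_def)
  define S where "S = q0 (qmul P (qcnj D))"
  have XI: "qnorm (qadd (qmul (qmul P x) (qcnj P)) (qscal [:x0:] (qsub (qmul P (qcnj D)) (qmul D (qcnj P)))))
   = qnorm P * (qnorm P * qnorm x
      + [:x0:] * 2 * q0 (qmul x (qsub (qmul (qcnj P) D) (qmul (qcnj D) P))))
     + 4 * [:x0:]*[:x0:] * (qnorm P * qnorm D - S * S)"
    using X_id[OF x0] by (simp add: S_def)
  show "let x = qconst (Quat 0 x1 x2 x3);
          X = qadd (qmul (qmul P x) (qcnj P))
                   (qscal [:x0:] (qsub (qmul P (qcnj D)) (qmul D (qcnj P))))
      in \<forall>i\<in>{1..m}. n i > 1 \<longrightarrow> N i ^ n i dvd qnorm X"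
    unfolding Let_def x_def[symmetric] XI
  proof (intro ballI impI)
    fix i assume i: "i \<in> {1..m}" and ni: "n i > 1"
    obtain a where a: "n i = Suc a" and a1: "a \<ge> 1" using ni by (cases "n i") auto
    have dP: "N i ^ n i dvd qnorm P" unfolding decomp using i by (intro dvd_prodI) auto
    have "N i ^ a dvd S"
    proof -
    have i1: "irreducible (N i)" "lead_coeff (N i) = 1" using irr i by auto
    have "N i ^ Suc a dvd qnorm (fst (dqprod hs))" using dP a PD by simp
    then have "N i ^ a dvd q0 (qmul (fst (dqprod hs)) (qcnj (snd (dqprod hs))))"
      by (rule main_ind[OF nr i1])
    then show "N i ^ a dvd S" unfolding S_def PD .
    qed
    then have "N i ^ a * N i ^ a dvd S * S" by (simp add: mult_dvd_mono)
    then have "N i ^ (a + a) dvd S * S" by (simp add: power_add)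
    moreover have "N i ^ n i dvd N i ^ (a + a)" using a a1 by (intro le_imp_power_dvd) simp
    ultimately have dS: "N i ^ n i dvd S * S" by (rule dvd_trans[rotated])
    have "N i ^ n i dvd qnorm P * qnorm D - S * S"
      using dP dS by (intro dvd_diff) simp_all
    then have "N i ^ n i dvd 4 * [:x0:]*[:x0:] * (qnorm P * qnorm D - S * S)" by (rule dvd_mult)
    moreover have "N i ^ n i dvd qnorm P * (qnorm P * qnorm x
      + [:x0:] * 2 * q0 (qmul x (qsub (qmul (qcnj P) D) (qmul (qcnj D) P))))" using dP by simp
    ultimately show "N i ^ n i dvd qnorm P * (qnorm P * qnorm x
      + [:x0:] * 2 * q0 (qmul x (qsub (qmul (qcnj P) D) (qmul (qcnj D) P))))
     + 4 * [:x0:]*[:x0:] * (qnorm P * qnorm D - S * S)" by (rule dvd_add[rotated])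
  qed
qed

end
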